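(* Assume (A) and $c_1<c_1^F$. Let $t^*>t_0$ be a minimizer of $t\mapsto\sup_{s\in(0,t)}\Upsilon(s,t)$ over $t>t_0$, and let $s^*\in(0,t^* )$ be a maximizer of $s\mapsto\Upsilon(s,t^* )$ over $(0,t^* )$. Then $k(s^*,t^* )\ge c_1s^*$.
   Context: $v:[0,\infty)\to[0,\infty)$ is continuous, $v(0)=0$, $\lim_{t\to\infty}v(t)/t^\alpha=0$ for some $\alpha<2$, and is the variance function of a centered Gaussian process $A$ on $\mathbb R$ with stationary increments and $A(0)=0$; $\Gamma(s,t):=\tfrac12(v(|s|)+v(|t|)-v(|t-s|))$. Fix $b>0$, $c_1>c_2>0$, $t_0:=b/(c_1-c_2)$. For $0<s<t$, $\Sigma(s,t):=\begin{pmatrix}v(t)&\Gamma(s,t)\\ \Gamma(s,t)&v(s)\end{pmatrix}$ (assumed nonsingular), $\Lambda_{s,t}(y,z):=\frac12(y,z)\Sigma(t-s,t)^{-1}(y,z)^\top$, $k(s,t):=\frac{\Gamma(s,t)}{v(t)}(b+c_2t)$, $\Upsilon(s,t):=\Lambda_{s,t}(b+c_2t,b+c_2t-c_1s)$ if $k(s,t)>c_1s$, else $(b+c_2t)^2/(2v(t))$. $L_c(t):=(b+ct)^2/(2v(t))$; $t^F_{c_2}$ a minimizer of $L_{c_2}$ on $(0,\infty)$; $c_1^F:=\sup_{s\in(0,t^F_{c_2})}k(s,t^F_{c_2})/s$. Assumption (A): $\sqrt v\in C^2([0,\infty))$, strictly increasing and strictly concave. *)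

theory Defs
  imports "HOL-Analysis.Analysis"
begin

text \<open>Covariance function of the process A: Gamma(s,t) = (v|s| + v|t| - v|t-s|)/2.\<close>
definition Gam :: "(real \<Rightarrow> real) \<Rightarrow> real \<Rightarrow> real \<Rightarrow> real" where
  "Gam v s t = (v \<bar>s\<bar> + v \<bar>t\<bar> - v \<bar>t - s\<bar>) / 2"

text \<open>v is the variance function of a centered Gaussian process on the reals with
  stationary increments and A(0)=0: equivalently (Kolmogorov) the covariance kernel
  Gamma is positive semidefinite on the reals.\<close>
definition gauss_si_variance :: "(real \<Rightarrow> real) \<Rightarrow> bool" where
  "gauss_si_variance v \<longleftrightarrow>
     (\<forall>(n::nat) (x::nat \<Rightarrow> real) (a::nat \<Rightarrow> real).
        0 \<le> (\<Sum>i<n. \<Sum>j<n. a i * a j * Gam v (x i) (x j)))"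

definition Sig :: "(real \<Rightarrow> real) \<Rightarrow> real \<Rightarrow> real \<Rightarrow> real^2^2" where
  "Sig v s t = vector [vector [v t, Gam v s t], vector [Gam v s t, v s]]"

definition Lam :: "(real \<Rightarrow> real) \<Rightarrow> real \<Rightarrow> real \<Rightarrow> real \<Rightarrow> real \<Rightarrow> real" where
  "Lam v s t y z = (1/2) * ((vector [y, z] :: real^2) \<bullet> (matrix_inv (Sig v (t - s) t) *v vector [y, z]))"

definition kk :: "(real \<Rightarrow> real) \<Rightarrow> real \<Rightarrow> real \<Rightarrow> real \<Rightarrow> real \<Rightarrow> real" where
  "kk v b c2 s t = Gam v s t / v t * (b + c2 * t)"

definition Ups :: "(real \<Rightarrow> real) \<Rightarrow> real \<Rightarrow> real \<Rightarrow> real \<Rightarrow> real \<Rightarrow> real \<Rightarrow> real" where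
  "Ups v b c1 c2 s t =
     (if kk v b c2 s t > c1 * s then Lam v s t (b + c2 * t) (b + c2 * t - c1 * s)
      else (b + c2 * t)^2 / (2 * v t))"

definition LL :: "(real \<Rightarrow> real) \<Rightarrow> real \<Rightarrow> real \<Rightarrow> real \<Rightarrow> real" where
  "LL v b c t = (b + c * t)^2 / (2 * v t)"

definition strictly_concave_on :: "real set \<Rightarrow> (real \<Rightarrow> real) \<Rightarrow> bool" where
  "strictly_concave_on S f \<longleftrightarrow>
     (\<forall>x\<in>S. \<forall>y\<in>S. \<forall>u. x \<noteq> y \<and> 0 < u \<and> u < 1 \<longrightarrow>
        f (u * x + (1 - u) * y) > u * f x + (1 - u) * f y)"

definition assmA :: "(real \<Rightarrow> real) \<Rightarrow> bool" where
  "assmA v \<longleftrightarrow>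
     (\<exists>d1 d2. continuous_on {0..} d1 \<and> continuous_on {0..} d2 \<and>
        (\<forall>t\<ge>0. ((\<lambda>x. sqrt (v x)) has_real_derivative d1 t) (at t within {0..})) \<and>
        (\<forall>t\<ge>0. (d1 has_real_derivative d2 t) (at t within {0..}))) \<and>
     strict_mono_on {0..} (\<lambda>x. sqrt (v x)) \<and>
     strictly_concave_on {0..} (\<lambda>x. sqrt (v x))"

end

theory Submission imports Defs begin


lemma sc_convex:
  fixes g :: "real \<Rightarrow> real"
  assumes "strictly_concave_on {0..} g"
  shows "convex_on {0..} (\<lambda>x. - g x)"
  unfolding convex_on_def
proof (intro conjI ballI allI impI)
  show "convex {0::real..}" by simp
  fix x y :: real and u w :: real
  assume xy: "x \<in> {0..}" "y \<in> {0..}" and u: "0 \<le> u" and w: "0 \<le> w" "u + w = 1"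
  show "- g (u *\<^sub>R x + w *\<^sub>R y) \<le> u * - g x + w * - g y"
  proof (cases "x = y \<or> u = 0 \<or> w = 0")
    case True
    then show ?thesis
    proof (elim disjE)
      assume "x = y"
      then have "u *\<^sub>R x + w *\<^sub>R y = x" using w by (simp flip: distrib_right)
      moreover have "u * - g x + w * - g y = - ((u + w) * g x)" using \<open>x = y\<close> by (simp add: algebra_simps)
      moreover have "- ((u + w) * g x) = - g x" using w by simp
      ultimately show ?thesis by simp
    next
      assume "u = 0" then show ?thesis using w by simp
    next
      assume "w = 0" then show ?thesis using w by simp
    qed
  next
    case False
    have ww: "w = 1 - u" using w by simp
    have H: "\<forall>x\<in>{0..}. \<forall>y\<in>{0..}. \<forall>u. x \<noteq> y \<and> 0 < u \<and> u < 1 \<longrightarrow>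
        g (u * x + (1 - u) * y) > u * g x + (1 - u) * g y" using assms unfolding strictly_concave_on_def .
    have "0 < u" "u < 1" using False u w by auto
    then have "g (u * x + (1 - u) * y) > u * g x + (1 - u) * g y"
      using H[rule_format, of x y u] xy False by blast
    then show ?thesis unfolding ww by simp
  qed
qed

lemma sc_tangent:
  fixes g d1 :: "real \<Rightarrow> real"
  assumes sc: "strictly_concave_on {0..} g"
    and der: "\<And>x. x > 0 \<Longrightarrow> (g has_real_derivative d1 x) (at x)"
    and x: "x > 0" and y: "y \<ge> 0"
  shows "g y \<le> g x + d1 x * (y - x)"
proof -
  have "(\<lambda>x. - g x) y - (\<lambda>x. - g x) x \<ge> (- d1 x) * (y - x)"
  proof (rule convex_on_imp_above_tangent[of "{0..}" "\<lambda>x. - g x" x y "- d1 x", OF sc_convex[OF sc]])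
    show "connected {0::real..}" by (rule convex_connected) (rule convex_real_interval)
    show "x \<in> interior {0..}" using x by simp
    show "y \<in> {0..}" using y by simp
    show "((\<lambda>x. - g x) has_real_derivative - d1 x) (at x within {0..})"
      using has_field_derivative_at_within[OF DERIV_minus[OF der[OF x]]] .
  qed
  then show ?thesis by (simp add: algebra_simps)
qed

lemma sc_tangent_strict:
  fixes g d1 :: "real \<Rightarrow> real"
  assumes sc: "strictly_concave_on {0..} g"
    and der: "\<And>x. x > 0 \<Longrightarrow> (g has_real_derivative d1 x) (at x)"
    and x: "x > 0" and y: "y \<ge> 0" and xy: "y \<noteq> x"
  shows "g y < g x + d1 x * (y - x)"
proof -
  define m where "m = (1/2) * y + (1 - 1/2) * x"
  have H: "\<forall>x\<in>{0..}. \<forall>y\<in>{0..}. \<forall>u. x \<noteq> y \<and> 0 < u \<and> u < 1 \<longrightarrow>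
        g (u * x + (1 - u) * y) > u * g x + (1 - u) * g y" using sc unfolding strictly_concave_on_def .
  have "g m > (1/2) * g y + (1 - 1/2) * g x"
    using H[rule_format, of y x "1/2"] x y xy unfolding m_def by auto
  moreover have "g m \<le> g x + d1 x * (m - x)"
    using sc_tangent[OF sc der x, of m] x y by (simp add: m_def)
  ultimately show ?thesis unfolding m_def by (simp add: algebra_simps)
qed

lemma sc_deriv_strict_dec:
  fixes g d1 :: "real \<Rightarrow> real"
  assumes sc: "strictly_concave_on {0..} g"
    and der: "\<And>x. x > 0 \<Longrightarrow> (g has_real_derivative d1 x) (at x)"
    and "0 < x" "x < y"
  shows "d1 y < d1 x"
proof -
  have "g y < g x + d1 x * (y - x)" using sc_tangent_strict[OF sc der] assms by auto
  moreover have "g x < g y + d1 y * (x - y)" using sc_tangent_strict[OF sc der] assms by auto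
  ultimately have "0 < (d1 x - d1 y) * (y - x)" by (simp add: algebra_simps)
  then show ?thesis using assms by (simp add: zero_less_mult_iff)
qed

lemma sc_subadd:
  fixes g :: "real \<Rightarrow> real"
  assumes sc: "strictly_concave_on {0..} g" and g0: "g 0 = 0"
    and "0 < s" "s < t"
  shows "g t < g s + g (t - s)"
proof -
  have H: "\<forall>x\<in>{0..}. \<forall>y\<in>{0..}. \<forall>u. x \<noteq> y \<and> 0 < u \<and> u < 1 \<longrightarrow>
        g (u * x + (1 - u) * y) > u * g x + (1 - u) * g y" using sc unfolding strictly_concave_on_def .
  have "g ((s/t) * t + (1 - s/t) * 0) > (s/t) * g t + (1 - s/t) * g 0"
    using H[rule_format, of t 0 "s/t"] assms by auto
  then have 1: "g s > (s/t) * g t" using assms g0 by simp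
  have "g (((t-s)/t) * t + (1 - (t-s)/t) * 0) > ((t-s)/t) * g t + (1 - (t-s)/t) * g 0"
    using H[rule_format, of t 0 "(t-s)/t"] assms by auto
  then have 2: "g (t-s) > ((t-s)/t) * g t" using assms g0 by simp
  have "(s/t) * g t + ((t-s)/t) * g t = g t" using assms by (simp add: field_simps)
  with 1 2 show ?thesis by linarith
qed




lemma matrix_inv_eqI:
  fixes M N :: "real^2^2"
  assumes "M ** N = mat 1" "N ** M = mat 1"
  shows "matrix_inv M = N"
proof -
  have ex: "\<exists>A'. M ** A' = mat 1 \<and> A' ** M = mat 1" using assms by blast
  define A where "A = matrix_inv M"
  have A: "M ** A = mat 1 \<and> A ** M = mat 1"
    unfolding A_def matrix_inv_def by (rule someI_ex[OF ex])
  have "A = A ** (M ** N)" using assms by (simp add: matrix_mul_rid)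
  also have "\<dots> = (A ** M) ** N" by (simp add: matrix_mul_assoc)
  also have "\<dots> = N" using A by (simp add: matrix_mul_lid)
  finally show ?thesis unfolding A_def .
qed

lemma quad2:
  fixes p q r y z :: real
  assumes d: "p * r - q * q \<noteq> 0"
  shows "(vector [y, z] :: real^2) \<bullet> (matrix_inv (vector [vector [p, q], vector [q, r]] :: real^2^2) *v vector [y, z])
         = (r * y^2 - 2 * q * y * z + p * z^2) / (p * r - q * q)"
proof -
  define D where "D = p * r - q * q"
  define M :: "real^2^2" where "M = vector [vector [p, q], vector [q, r]]"
  define N :: "real^2^2" where "N = vector [vector [r / D, - q / D], vector [- q / D, p / D]]"
  have DD: "D \<noteq> 0" using d D_def by simp
  have X: "(p * r - q*q)^2 = p*(p*(r*r)) + q*(q*(q*q)) - p*(q*(q*(r*2)))"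
    by (simp add: power2_eq_square algebra_simps)
  have X2: "p*(p*(r*r)) + q*(q*(q*q)) \<noteq> p*(q*(q*(r*2)))"
    using X d by auto
  have e1: "M ** N = mat 1"
    unfolding M_def N_def matrix_matrix_mult_def mat_def vec_eq_iff forall_2 sum_2
    using DD X2 by (simp add: D_def field_simps)
  have e2: "N ** M = mat 1"
    unfolding M_def N_def matrix_matrix_mult_def mat_def vec_eq_iff forall_2 sum_2
    using DD X2 by (simp add: D_def field_simps)
  have "matrix_inv M = N" by (rule matrix_inv_eqI[OF e1 e2])
  then have "(vector [y, z] :: real^2) \<bullet> (matrix_inv M *v vector [y, z])
      = y * (r / D * y + - q / D * z) + z * (- q / D * y + p / D * z)"
    unfolding N_def matrix_vector_mult_def inner_vec_def sum_2 by simp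
  also have "\<dots> = (r * y^2 - 2 * q * y * z + p * z^2) / D"
    using DD by (simp add: field_simps power2_eq_square)
  finally show ?thesis unfolding M_def D_def .
qed

lemma Gam_simp:
  assumes "0 < s" "s < t"
  shows "Gam v s t = (v s + v t - v (t - s)) / 2"
    and "Gam v (t - s) t = (v (t - s) + v t - v s) / 2"
  using assms by (simp_all add: Gam_def)

lemma lam_alg:
  fixes a r q y z :: real
  assumes a: "a \<noteq> 0" and D: "a * r - q * q \<noteq> 0"
  shows "(1/2) * ((r * y^2 - 2 * q * y * z + a * z^2) / (a * r - q * q))
       = y^2 / (2 * a) + (z - q * y / a)^2 * a / (2 * (a * r - q * q))"
  using a D by (simp add: field_simps power2_eq_square)

lemma Lam_eq:
  assumes "0 < s" "s < t" and a: "v t \<noteq> 0"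
    and D: "v t * v s - (Gam v s t)^2 \<noteq> 0"
  shows "Lam v s t y z = y^2 / (2 * v t)
           + (z - (v t - Gam v s t) * y / v t)^2 * v t / (2 * (v t * v s - (Gam v s t)^2))"
proof -
  have q: "Gam v (t - s) t = v t - Gam v s t" using Gam_simp[OF assms(1,2), of v] by (simp add: field_simps)
  have DD: "v t * v (t - s) - Gam v (t - s) t * Gam v (t - s) t = v t * v s - (Gam v s t)^2"
    unfolding Gam_simp(1)[OF assms(1,2)] Gam_simp(2)[OF assms(1,2)]
    by (simp add: power2_eq_square field_simps; algebra)
  have "Lam v s t y z = (1/2) * ((v (t - s) * y^2 - 2 * Gam v (t - s) t * y * z + v t * z^2)
          / (v t * v (t - s) - Gam v (t - s) t * Gam v (t - s) t))"
    unfolding Lam_def Sig_def using D DD by (simp add: quad2)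
  also have "\<dots> = y^2 / (2 * v t) + (z - Gam v (t - s) t * y / v t)^2 * v t
          / (2 * (v t * v (t - s) - Gam v (t - s) t * Gam v (t - s) t))"
    by (rule lam_alg) (use a D DD in auto)
  finally have X: "Lam v s t y z = y^2 / (2 * v t) + (z - Gam v (t - s) t * y / v t)^2 * v t
          / (2 * (v t * v (t - s) - Gam v (t - s) t * Gam v (t - s) t))" .
  show ?thesis using X unfolding DD unfolding q .
qed

lemma heron:
  fixes G S R :: real
  shows "4 * (G^2 * S^2 - ((S^2 + G^2 - R^2) / 2)^2) = (G+R+S)*(R+S-G)*(G+S-R)*(G+R-S)"
  by (simp add: power2_eq_square algebra_simps divide_simps)

lemma cont_bound:
  fixes f :: "real \<Rightarrow> real"
  assumes "continuous_on {a..b} f"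
  shows "\<exists>M. \<forall>x\<in>{a..b}. \<bar>f x\<bar> \<le> M"
proof -
  have "compact (f ` {a..b})" by (rule compact_continuous_image[OF assms compact_Icc])
  then have "bounded (f ` {a..b})" by (rule compact_imp_bounded)
  then obtain M where "\<forall>y\<in>f ` {a..b}. norm y \<le> M" unfolding bounded_iff by blast
  then show ?thesis by auto
qed

lemma mvt_bound:
  fixes f f' :: "real \<Rightarrow> real"
  assumes ab: "a \<le> b" and cf: "continuous_on {a..b} f"
    and d: "\<And>x. a < x \<Longrightarrow> x < b \<Longrightarrow> (f has_real_derivative f' x) (at x)"
    and M: "\<And>x. a < x \<Longrightarrow> x < b \<Longrightarrow> \<bar>f' x\<bar> \<le> M"
  shows "\<bar>f b - f a\<bar> \<le> M * (b - a)"
proof (cases "a = b")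
  case True then show ?thesis by simp
next
  case False
  then have lt: "a < b" using ab by simp
  obtain l z where z: "a < z" "z < b" "(f has_real_derivative l) (at z)" "f b - f a = (b - a) * l"
    using MVT[OF lt cf] d real_differentiable_def by blast
  have "l = f' z" using DERIV_unique[OF z(3) d[OF z(1,2)]] .
  then have "\<bar>f b - f a\<bar> = (b - a) * \<bar>f' z\<bar>" using z(4) lt by (simp add: abs_mult)
  also have "\<dots> \<le> (b - a) * M" using M[OF z(1,2)] lt by (intro mult_left_mono) auto
  finally show ?thesis by (simp add: mult.commute)
qed

lemma lip:
  fixes f f' :: "real \<Rightarrow> real"
  assumes d: "\<And>x. a \<le> x \<Longrightarrow> x \<le> b \<Longrightarrow> (f has_real_derivative f' x) (at x)"
    and M: "\<And>x. a \<le> x \<Longrightarrow> x \<le> b \<Longrightarrow> \<bar>f' x\<bar> \<le> M"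
    and x: "a \<le> x" "x \<le> b" and y: "a \<le> y" "y \<le> b"
  shows "\<bar>f x - f y\<bar> \<le> M * \<bar>x - y\<bar>"
proof -
  have gen: "\<bar>f q - f p\<bar> \<le> M * (q - p)" if "a \<le> p" "p \<le> q" "q \<le> b" for p q
  proof (rule mvt_bound)
    show "p \<le> q" by fact
    show "continuous_on {p..q} f"
      using d that by (intro continuous_at_imp_continuous_on ballI DERIV_isCont[OF d]) auto
    show "(f has_real_derivative f' x) (at x)" if "p < x" "x < q" for x
      using d that \<open>a \<le> p\<close> \<open>q \<le> b\<close> by auto
    show "\<bar>f' x\<bar> \<le> M" if "p < x" "x < q" for x
      using M that \<open>a \<le> p\<close> \<open>q \<le> b\<close> by auto
  qed
  show ?thesis
  proof (cases "x \<le> y")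
    case True then show ?thesis using gen[of x y] x y by (simp add: abs_minus_commute)
  next
    case False then show ?thesis using gen[of y x] x y by simp
  qed
qed



lemma d1_mono:
  fixes g d1 :: "real \<Rightarrow> real"
  assumes sc: "strictly_concave_on {0..} g"
    and der: "\<And>x. x > 0 \<Longrightarrow> (g has_real_derivative d1 x) (at x)"
    and "0 < x" "x \<le> y"
  shows "d1 y \<le> d1 x"
  using sc_deriv_strict_dec[OF sc der, of x y] assms by (cases "x = y") auto

lemma S_lower:
  fixes g d1 :: "real \<Rightarrow> real"
  assumes sc: "strictly_concave_on {0..} g"
    and der: "\<And>x. x > 0 \<Longrightarrow> (g has_real_derivative d1 x) (at x)"
    and g0: "g 0 = 0" and s: "0 < s" "s \<le> t / 2"
  shows "g s + g (t - s) - g t \<ge> (s/2) * (d1 (t/4) - d1 (t/2))"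
proof -
  have 1: "g 0 \<le> g (s/2) + d1 (s/2) * (0 - s/2)" using sc_tangent[OF sc der, of "s/2" 0] s by simp
  have 2: "g (s/2) \<le> g s + d1 s * (s/2 - s)" using sc_tangent[OF sc der, of s "s/2"] s by simp
  have 3: "g t \<le> g (t - s) + d1 (t - s) * (t - (t - s))" using sc_tangent[OF sc der, of "t - s" t] s by simp
  have 4: "d1 (t/4) \<le> d1 (s/2)" using d1_mono[OF sc der, of "s/2" "t/4"] s by simp
  have 5: "d1 (t - s) \<le> d1 (t/2)" using d1_mono[OF sc der, of "t/2" "t - s"] s by simp
  have 6: "d1 (t - s) \<le> d1 s" using d1_mono[OF sc der, of s "t - s"] s by simp
  have A: "s * d1 (t/4) \<le> s * d1 (s/2)" using 4 s by (intro mult_left_mono) auto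
  have B: "s * d1 (t - s) \<le> s * d1 (t/2)" using 5 s by (intro mult_left_mono) auto
  have C: "s * d1 (t - s) \<le> s * d1 s" using 6 s by (intro mult_left_mono) auto
  have e1: "0 \<le> g (s/2) - s * d1 (s/2) / 2" using 1 g0 by (simp add: algebra_simps)
  have e2: "g (s/2) \<le> g s - s * d1 s / 2" using 2 by (simp add: algebra_simps)
  have e3: "g t \<le> g (t - s) + s * d1 (t - s)" using 3 by (simp add: algebra_simps)
  have "(s/2) * (d1 (t/4) - d1 (t/2)) = s * d1 (t/4) / 2 - s * d1 (t/2) / 2" by (simp add: algebra_simps)
  with A B C e1 e2 e3 show ?thesis by linarith
qed


lemma mult_mono4:
  fixes a b c d A B C D :: real
  assumes "0 \<le> a" "a \<le> A" "0 \<le> b" "b \<le> B" "0 \<le> c" "c \<le> C" "0 \<le> d" "d \<le> D"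
  shows "a * b * c * d \<le> A * B * C * D"
proof -
  have "a * b \<le> A * B" using assms by (intro mult_mono) auto
  moreover have "0 \<le> a * b" using assms by simp
  ultimately have "a * b * c \<le> A * B * C" using assms by (intro mult_mono) auto
  moreover have "0 \<le> a * b * c" using assms by simp
  ultimately show ?thesis using assms by (intro mult_mono) auto
qed

lemma prod_diff_bound:
  fixes x0 x1 y0 y1 A P B Q :: real
  assumes "\<bar>x1 - x0\<bar> \<le> A" "\<bar>y1\<bar> \<le> P" "\<bar>x0\<bar> \<le> B" "\<bar>y1 - y0\<bar> \<le> Q"
  shows "\<bar>x1 * y1 - x0 * y0\<bar> \<le> A * P + B * Q"
proof -
  have "x1 * y1 - x0 * y0 = (x1 - x0) * y1 + x0 * (y1 - y0)" by (simp add: algebra_simps)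
  then have "\<bar>x1 * y1 - x0 * y0\<bar> \<le> \<bar>x1 - x0\<bar> * \<bar>y1\<bar> + \<bar>x0\<bar> * \<bar>y1 - y0\<bar>"
    by (metis abs_mult abs_triangle_ineq)
  also have "\<dots> \<le> A * P + B * Q"
    using assms by (intro add_mono mult_mono) auto
  finally show ?thesis .
qed

theorem lemma3p9:
  fixes v :: "real \<Rightarrow> real" and b c1 c2 t0 tF tstar sstar :: real
  assumes v_nonneg: "\<forall>t\<ge>0. 0 \<le> v t"
    and v_cont: "continuous_on {0..} v"
    and v_0: "v 0 = 0"
    and v_growth: "\<exists>\<alpha><2. ((\<lambda>t. v t / t powr \<alpha>) \<longlongrightarrow> 0) at_top"
    and v_gauss: "gauss_si_variance v"
    and b_pos: "b > 0"
    and c_order: "c1 > c2" "c2 > 0"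
    and t0_def: "t0 = b / (c1 - c2)"
    and Sig_nonsing: "\<forall>s t. 0 < s \<and> s < t \<longrightarrow> invertible (Sig v s t)"
    and A: "assmA v"
    and tF_pos: "tF > 0"
    and tF_min: "\<forall>t>0. LL v b c2 tF \<le> LL v b c2 t"
    and c1_lt: "ereal c1 < (SUP s\<in>{0<..<tF}. ereal (kk v b c2 s tF / s))"
    and tstar_gt: "tstar > t0"
    and tstar_min: "\<forall>t>t0. (SUP s\<in>{0<..<tstar}. ereal (Ups v b c1 c2 s tstar))
                          \<le> (SUP s\<in>{0<..<t}. ereal (Ups v b c1 c2 s t))"
    and sstar_in: "0 < sstar" "sstar < tstar"
    and sstar_max: "\<forall>s. 0 < s \<and> s < tstar \<longrightarrow> Ups v b c1 c2 s tstar \<le> Ups v b c1 c2 sstar tstar"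
  shows "kk v b c2 sstar tstar \<ge> c1 * sstar"
proof (rule ccontr)
  assume neg: "\<not> kk v b c2 sstar tstar \<ge> c1 * sstar"
  define g where "g = (\<lambda>x. sqrt (v x))"
  obtain d1 d2 where cd1: "continuous_on {0..} d1" and cd2: "continuous_on {0..} d2"
    and gDw: "\<forall>t\<ge>0. (g has_real_derivative d1 t) (at t within {0..})"
    and d1Dw: "\<forall>t\<ge>0. (d1 has_real_derivative d2 t) (at t within {0..})"
    and smono: "strict_mono_on {0..} g" and sc: "strictly_concave_on {0..} g"
    using A unfolding assmA_def g_def by blast
  have atx: "\<And>x::real. x > 0 \<Longrightarrow> at x within {0..} = at x"
    by (intro at_within_interior) simp
  have gD: "\<And>x. x > 0 \<Longrightarrow> (g has_real_derivative d1 x) (at x)"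
    using gDw atx by (metis less_imp_le)
  have d1D: "\<And>x. x > 0 \<Longrightarrow> (d1 has_real_derivative d2 x) (at x)"
    using d1Dw atx by (metis less_imp_le)
  have vg: "\<And>x. x \<ge> 0 \<Longrightarrow> v x = (g x)^2" using v_nonneg by (simp add: g_def)
  have g0: "g 0 = 0" by (simp add: g_def v_0)
  have gpos: "\<And>x. x > 0 \<Longrightarrow> g x > 0"
    using strict_mono_onD[OF smono, of 0] g0 by auto
  have gmono: "\<And>x y. 0 \<le> x \<Longrightarrow> x \<le> y \<Longrightarrow> g x \<le> g y"
    using strict_mono_onD[OF smono] by (metis atLeast_iff order_le_less order_trans)
  have gnn: "\<And>x. x \<ge> 0 \<Longrightarrow> g x \<ge> 0" using gmono[of 0] g0 by simp
  have gcont: "continuous_on {0..} g" unfolding g_def using v_cont by (intro continuous_intros)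
  define v1 where "v1 = (\<lambda>x. 2 * g x * d1 x)"
  define v2 where "v2 = (\<lambda>x. 2 * d1 x * d1 x + 2 * g x * d2 x)"
  have vD: "\<And>x. x > 0 \<Longrightarrow> (v has_real_derivative v1 x) (at x)"
  proof -
    fix x :: real assume x: "x > 0"
    have "((\<lambda>y. g y * g y) has_real_derivative v1 x) (at x)"
      unfolding v1_def by (rule DERIV_cong[OF DERIV_mult[OF gD[OF x] gD[OF x]]]) (simp add: algebra_simps)
    then show "(v has_real_derivative v1 x) (at x)"
      by (rule has_field_derivative_transform_within_open[where S="{0<..}"])
         (use x vg in \<open>auto simp: power2_eq_square\<close>)
  qed
  have v1D: "\<And>x. x > 0 \<Longrightarrow> (v1 has_real_derivative v2 x) (at x)"
  proof -
    fix x :: real assume x: "x > 0"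
    show "(v1 has_real_derivative v2 x) (at x)"
      unfolding v1_def
      by (rule DERIV_cong[OF DERIV_mult[OF DERIV_cmult[OF gD[OF x]] d1D[OF x]]])
         (simp add: v2_def algebra_simps)
  qed
  have v1cont: "continuous_on {0..} v1" unfolding v1_def using gcont cd1 by (intro continuous_intros)
  have v2cont: "continuous_on {0..} v2" unfolding v2_def using gcont cd1 cd2 by (intro continuous_intros)
  have tang: "\<And>x y. 0 < x \<Longrightarrow> 0 \<le> y \<Longrightarrow> g y \<le> g x + d1 x * (y - x)"
    by (rule sc_tangent[of g d1]) (auto intro: sc gD)
  have tangs: "\<And>x y. 0 < x \<Longrightarrow> 0 \<le> y \<Longrightarrow> y \<noteq> x \<Longrightarrow> g y < g x + d1 x * (y - x)"
    by (rule sc_tangent_strict[of g d1]) (auto intro: sc gD)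
  have d1dec: "\<And>x y. 0 < x \<Longrightarrow> x < y \<Longrightarrow> d1 y < d1 x"
    by (rule sc_deriv_strict_dec[of g d1]) (auto intro: sc gD)
  have d1mono: "\<And>x y. 0 < x \<Longrightarrow> x \<le> y \<Longrightarrow> d1 y \<le> d1 x"
    by (rule d1_mono[of g d1]) (auto intro: sc gD)
  have subadd: "\<And>s t. 0 < s \<Longrightarrow> s < t \<Longrightarrow> g t < g s + g (t - s)"
    by (rule sc_subadd[of g]) (auto intro: sc g0)
  have Slow: "\<And>s t. 0 < s \<Longrightarrow> s \<le> t / 2 \<Longrightarrow> g s + g (t - s) - g t \<ge> (s/2) * (d1 (t/4) - d1 (t/2))"
    by (rule S_lower[of g d1]) (auto intro: sc gD g0)
  have d1pos: "\<And>x. x > 0 \<Longrightarrow> d1 x > 0"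
  proof -
    fix x :: real assume x: "x > 0"
    have "g (x + 1) \<le> g x + d1 x * (x + 1 - x)" using tang[OF x, of "x+1"] x by simp
    moreover have "g x < g (x + 1)" using strict_mono_onD[OF smono, of x "x+1"] x by simp
    ultimately show "d1 x > 0" by simp
  qed
  have vpos: "\<And>x. x > 0 \<Longrightarrow> v x > 0"
  proof -
    fix x :: real assume "x > 0"
    then show "v x > 0" using vg[of x] gpos[of x] by simp
  qed
  define Dl where "Dl = (\<lambda>s t. v t * v s - (Gam v s t)^2)"
  have Dl_heron: "\<And>s t. 0 < s \<Longrightarrow> s < t \<Longrightarrow> 4 * Dl s t =
      (g t + g (t-s) + g s) * (g (t-s) + g s - g t) * (g t + g s - g (t-s)) * (g t + g (t-s) - g s)"
  proof -
    fix s t :: real assume st: "0 < s" "s < t"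
    have "Dl s t = (g t)^2 * (g s)^2 - (((g s)^2 + (g t)^2 - (g (t-s))^2) / 2)^2"
      unfolding Dl_def Gam_simp(1)[OF st] using vg st by simp
    then show "4 * Dl s t = (g t + g (t-s) + g s) * (g (t-s) + g s - g t) * (g t + g s - g (t-s)) * (g t + g (t-s) - g s)"
      using heron[of "g t" "g s" "g (t-s)"] by simp
  qed
  have Dl_pos: "\<And>s t. 0 < s \<Longrightarrow> s < t \<Longrightarrow> Dl s t > 0"
  proof -
    fix s t :: real assume st: "0 < s" "s < t"
    have "g (t-s) + g s - g t > 0" using subadd[OF st] by simp
    moreover have "g t + g s - g (t-s) > 0" using gmono[of "t-s" t] gpos[of s] st by simp
    moreover have "g t + g (t-s) - g s > 0" using gmono[of s t] gpos[of "t-s"] st by simp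
    moreover have "g t + g (t-s) + g s > 0" using gpos[of s] gpos[of t] gpos[of "t-s"] st by simp
    ultimately have "4 * Dl s t > 0" unfolding Dl_heron[OF st] by simp
    then show "Dl s t > 0" by simp
  qed
  have Ups_eq: "\<And>s t. 0 < s \<Longrightarrow> s < t \<Longrightarrow> kk v b c2 s t > c1 * s \<Longrightarrow>
      Ups v b c1 c2 s t = LL v b c2 t + (kk v b c2 s t - c1 * s)^2 * v t / (2 * Dl s t)"
  proof -
    fix s t :: real assume st: "0 < s" "s < t" and kk: "kk v b c2 s t > c1 * s"
    have vt: "v t \<noteq> 0" using vpos[of t] st by simp
    have D0: "Dl s t \<noteq> 0" using Dl_pos[OF st] by simp
    have "Ups v b c1 c2 s t = Lam v s t (b + c2 * t) (b + c2 * t - c1 * s)"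
      using kk by (simp add: Ups_def)
    also have "\<dots> = (b + c2 * t)^2 / (2 * v t)
           + (b + c2 * t - c1 * s - (v t - Gam v s t) * (b + c2 * t) / v t)^2 * v t / (2 * Dl s t)"
      using Lam_eq[of s t v, OF st vt] D0 unfolding Dl_def by simp
    also have "b + c2 * t - c1 * s - (v t - Gam v s t) * (b + c2 * t) / v t = kk v b c2 s t - c1 * s"
      using vt unfolding kk_def by (simp add: field_simps)
    finally show "Ups v b c1 c2 s t = LL v b c2 t + (kk v b c2 s t - c1 * s)^2 * v t / (2 * Dl s t)"
      by (simp add: LL_def)
  qed
  have Ups_else: "\<And>s t. \<not> kk v b c2 s t > c1 * s \<Longrightarrow> Ups v b c1 c2 s t = LL v b c2 t"
    by (simp add: Ups_def LL_def)
  have t0pos: "t0 > 0" using t0_def b_pos c_order by simp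
  have tspos: "tstar > 0" using tstar_gt t0pos by simp
  have Dt: "\<And>s. 0 < s \<Longrightarrow> s < tstar \<Longrightarrow> kk v b c2 s tstar \<le> c1 * s"
  proof (rule ccontr)
    fix s assume s: "0 < s" "s < tstar" and nk: "\<not> kk v b c2 s tstar \<le> c1 * s"
    have "Ups v b c1 c2 sstar tstar = LL v b c2 tstar" using neg by (intro Ups_else) simp
    moreover have "Ups v b c1 c2 s tstar > LL v b c2 tstar"
    proof -
      have "(kk v b c2 s tstar - c1 * s)^2 * v tstar / (2 * Dl s tstar) > 0"
        using nk vpos[OF tspos] Dl_pos[OF s] by (intro divide_pos_pos mult_pos_pos) auto
      then show ?thesis using Ups_eq[OF s] nk by simp
    qed
    ultimately show False using sstar_max s by force
  qed
  have tne: "tstar \<noteq> tF"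
  proof
    assume eq: "tstar = tF"
    obtain s where s: "s \<in> {0<..<tF}" and cs: "ereal c1 < ereal (kk v b c2 s tF / s)"
      using c1_lt unfolding less_SUP_iff by blast
    have "c1 * s < kk v b c2 s tF" using cs s by (simp add: field_simps)
    moreover have "kk v b c2 s tF \<le> c1 * s" using Dt[of s] s eq by simp
    ultimately show False by simp
  qed
  define Ld where "Ld = (\<lambda>t. ((2 * (b + c2 * t) * c2) * (2 * v t) - (b + c2 * t)^2 * (2 * v1 t)) / ((2 * v t) * (2 * v t)))"
  have LLfun: "LL v b c2 = (\<lambda>t. (b + c2 * t)^2 / (2 * v t))" by (rule ext) (simp add: LL_def)
  have LD: "\<And>t. t > 0 \<Longrightarrow> (LL v b c2 has_real_derivative Ld t) (at t)"
  proof -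
    fix t :: real assume t: "t > 0"
    have f: "((\<lambda>t. (b + c2 * t)^2) has_real_derivative 2 * (b + c2 * t) * c2) (at t)"
      by (auto intro!: derivative_eq_intros)
    have gg: "((\<lambda>t. 2 * v t) has_real_derivative 2 * v1 t) (at t)"
      by (rule DERIV_cmult[OF vD[OF t]])
    have "2 * v t \<noteq> 0" using vpos[of t] t by simp
    from DERIV_divide[OF f gg this] show "(LL v b c2 has_real_derivative Ld t) (at t)"
      unfolding LLfun Ld_def .
  qed
  define N where "N = (\<lambda>t. c2 * g t - (b + c2 * t) * d1 t)"
  have Ld0: "\<And>t. t > 0 \<Longrightarrow> Ld t = 0 \<Longrightarrow> N t = 0"
  proof -
    fix t :: real assume t: "t > 0" and L0: "Ld t = 0"
    have vt: "v t > 0" using vpos[of t] t by simp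
    have bt: "b + c2 * t > 0" using b_pos c_order t by (simp add: add_pos_pos)
    have "(2 * (b + c2 * t) * c2) * (2 * v t) - (b + c2 * t)^2 * (2 * v1 t) = 0"
      using L0 vt unfolding Ld_def by simp
    then have "(b + c2 * t) * (4 * c2 * v t - 2 * (b + c2 * t) * v1 t) = 0"
      by (simp add: algebra_simps power2_eq_square)
    then have "4 * c2 * v t - 2 * (b + c2 * t) * v1 t = 0" using bt by simp
    then have "g t * (4 * (c2 * g t - (b + c2 * t) * d1 t)) = 0"
      unfolding v1_def using vg[of t] t by (simp add: algebra_simps power2_eq_square)
    then show "N t = 0" unfolding N_def using gpos[of t] t by simp
  qed
  have Nmono: "\<And>t1 t2. 0 < t1 \<Longrightarrow> t1 < t2 \<Longrightarrow> N t1 < N t2"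
  proof -
    fix t1 t2 :: real assume t: "0 < t1" "t1 < t2"
    have a1: "g t1 < g t2 + d1 t2 * (t1 - t2)" using tangs[of t2 t1] t by simp
    have a2: "d1 t2 < d1 t1" using d1dec t by simp
    have id: "N t2 - N t1 = c2 * (g t2 - g t1 - d1 t2 * (t2 - t1)) + (b + c2 * t1) * (d1 t1 - d1 t2)"
      unfolding N_def by (simp add: algebra_simps)
    have "c2 * (g t2 - g t1 - d1 t2 * (t2 - t1)) > 0"
      using a1 c_order by (intro mult_pos_pos) (auto simp: algebra_simps)
    moreover have "(b + c2 * t1) * (d1 t1 - d1 t2) > 0"
      using a2 b_pos c_order t by (intro mult_pos_pos add_pos_pos) auto
    ultimately show "N t1 < N t2" using id by simp
  qed
  have LdF: "Ld tF = 0"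
  proof (rule DERIV_local_min[OF LD[OF tF_pos] tF_pos])
    show "\<forall>y. \<bar>tF - y\<bar> < tF \<longrightarrow> LL v b c2 tF \<le> LL v b c2 y"
      using tF_min by (auto simp: abs_if split: if_splits)
  qed
  have Ldne: "Ld tstar \<noteq> 0"
  proof
    assume "Ld tstar = 0"
    then have "N tstar = 0" using Ld0 tspos by simp
    moreover have "N tF = 0" using Ld0 tF_pos LdF by simp
    ultimately show False using Nmono[of tstar tF] Nmono[of tF tstar] tspos tF_pos tne
      by (cases "tstar < tF") auto
  qed
  define eps where "eps = tstar - t0"
  define r where "r = min eps tstar / 4"
  define T1 where "T1 = tstar - r"
  define T2 where "T2 = tstar + r"
  define eta where "eta = min r ((c1 - c2) * eps / (2 * c1))"
  have eps: "eps > 0" using tstar_gt eps_def by simp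
  have r: "r > 0" "r \<le> eps / 4" "r \<le> tstar / 4" using eps tspos unfolding r_def by auto
  have c12: "c1 - c2 > 0" "c1 > 0" using c_order by auto
  have eta: "eta > 0" "eta \<le> r" "c1 * eta \<le> (c1 - c2) * eps / 2"
  proof -
    show "eta > 0" unfolding eta_def using r eps c12 by simp
    show "eta \<le> r" unfolding eta_def by simp
    have "c1 * eta \<le> c1 * ((c1 - c2) * eps / (2 * c1))"
      unfolding eta_def using c12 by (intro mult_left_mono) auto
    then show "c1 * eta \<le> (c1 - c2) * eps / 2" using c12 by simp
  qed
  have T1pos: "T1 > 0" and T1t0: "T1 > t0" and T12: "T2 < 2 * T1" and etaT1: "eta < T1"
    and T1T2: "T1 < T2" and etaT2: "eta \<le> T2"
    using r eta eps tspos unfolding T1_def T2_def eps_def by auto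
  have bt0: "b = (c1 - c2) * t0" using t0_def c12 by simp
  have keyeta: "\<And>t. T1 \<le> t \<Longrightarrow> b + c2 * t + c1 * eta \<le> c1 * t"
  proof -
    fix t assume t: "T1 \<le> t"
    have "t - t0 \<ge> eps / 2" using t r unfolding T1_def eps_def by simp
    then have "(c1 - c2) * (t - t0) \<ge> (c1 - c2) * (eps / 2)" using c12 by (intro mult_left_mono) auto
    moreover have "(c1 - c2) * (t - t0) = c1 * t - c2 * t - b" using bt0 by (simp add: algebra_simps)
    moreover have "(c1 - c2) * (eps / 2) = (c1 - c2) * eps / 2" by simp
    ultimately show "b + c2 * t + c1 * eta \<le> c1 * t" using eta(3) by linarith
  qed
  obtain M1 where M1: "\<forall>x\<in>{0..T2}. \<bar>v1 x\<bar> \<le> M1"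
    using cont_bound[OF continuous_on_subset[OF v1cont]] by fastforce
  obtain M2 where M2: "\<forall>x\<in>{0..T2}. \<bar>v2 x\<bar> \<le> M2"
    using cont_bound[OF continuous_on_subset[OF v2cont]] by fastforce
  have M1nn: "M1 \<ge> 0" using M1 T1T2 T1pos by (metis abs_ge_zero atLeastAtMost_iff less_imp_le order_trans order_refl)
  have M2nn: "M2 \<ge> 0" using M2 T1T2 T1pos by (metis abs_ge_zero atLeastAtMost_iff less_imp_le order_trans order_refl)
  define phi where "phi = (\<lambda>x. (b + c2 * x) / v x)"
  define phi' where "phi' = (\<lambda>x. (c2 * v x - (b + c2 * x) * v1 x) / (v x * v x))"
  have phiD: "\<And>x. x > 0 \<Longrightarrow> (phi has_real_derivative phi' x) (at x)"
  proof -
    fix x :: real assume x: "x > 0"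
    have f: "((\<lambda>t. b + c2 * t) has_real_derivative c2) (at x)"
      by (auto intro!: derivative_eq_intros)
    have "v x \<noteq> 0" using vpos[of x] x by simp
    from DERIV_divide[OF f vD[OF x] this] show "(phi has_real_derivative phi' x) (at x)"
      unfolding phi_def phi'_def by simp
  qed
  have phi'cont: "continuous_on {T1..T2} phi'"
  proof -
    have sub: "{T1..T2} \<subseteq> {0..}" using T1pos by auto
    have "\<forall>x\<in>{T1..T2}. v x * v x \<noteq> 0"
    proof
      fix x assume "x \<in> {T1..T2}"
      then have "v x > 0" using vpos[of x] T1pos by simp
      then show "v x * v x \<noteq> 0" by simp
    qed
    then show ?thesis unfolding phi'_def
      using continuous_on_subset[OF v_cont sub] continuous_on_subset[OF v1cont sub]
      by (intro continuous_intros) auto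
  qed
  obtain Lp where Lp: "\<forall>x\<in>{T1..T2}. \<bar>phi' x\<bar> \<le> Lp"
    using cont_bound[OF phi'cont] by blast
  have Lpnn: "Lp \<ge> 0" using Lp T1T2 by (metis abs_ge_zero atLeastAtMost_iff less_imp_le order_trans order_refl)
  have vmono: "\<And>x y. 0 \<le> x \<Longrightarrow> x \<le> y \<Longrightarrow> v x \<le> v y"
  proof -
    fix x y :: real assume "0 \<le> x" "x \<le> y"
    then show "v x \<le> v y" using vg[of x] vg[of y] gmono[of x y] gnn[of x] by (simp add: power_mono)
  qed
  define Phi where "Phi = (b + c2 * T2) / v T1"
  have phibound: "\<And>t. T1 \<le> t \<Longrightarrow> t \<le> T2 \<Longrightarrow> \<bar>phi t\<bar> \<le> Phi"
  proof -
    fix t assume t: "T1 \<le> t" "t \<le> T2"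
    have vt: "v T1 \<le> v t" using vmono[of T1 t] T1pos t by simp
    have vT1: "v T1 > 0" using vpos[of T1] T1pos by simp
    have bt: "0 < b + c2 * t" using b_pos c_order t T1pos by (simp add: add_pos_pos)
    have "b + c2 * t \<le> b + c2 * T2" using t c_order by simp
    then have "(b + c2 * t) / v t \<le> (b + c2 * T2) / v T1"
      using vt vT1 bt by (intro frac_le) auto
    moreover have "phi t \<ge> 0" unfolding phi_def using bt vt vT1 by simp
    ultimately show "\<bar>phi t\<bar> \<le> Phi" unfolding Phi_def phi_def by simp
  qed
  have Phinn: "Phi \<ge> 0" using phibound[of T1] T1T2 by (metis abs_ge_zero order_trans less_imp_le order_refl)
  define del where "del = d1 (T2/4) - d1 (T1/2)"
  have del: "del > 0" unfolding del_def using d1dec[of "T2/4" "T1/2"] T12 T1pos T1T2 by simp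
  define cS where "cS = (eta / T2) * del / 2"
  have cS: "cS > 0" unfolding cS_def using del eta T1pos T1T2 by simp
  have Slow2: "\<And>t s. T1 \<le> t \<Longrightarrow> t \<le> T2 \<Longrightarrow> 0 < s \<Longrightarrow> s \<le> t - eta \<Longrightarrow> g s + g (t - s) - g t \<ge> cS * s"
  proof -
    fix t s assume t: "T1 \<le> t" "t \<le> T2" and s: "0 < s" "s \<le> t - eta"
    have dt: "d1 (t/4) - d1 (t/2) \<ge> del"
      using d1mono[of "t/4" "T2/4"] d1mono[of "T1/2" "t/2"] t T1pos unfolding del_def by simp
    have ratio: "eta / T2 \<le> 1" "eta / T2 \<ge> 0" using etaT2 eta T1pos T1T2 by auto
    show "g s + g (t - s) - g t \<ge> cS * s"
    proof (cases "s \<le> t / 2")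
      case True
      have "g s + g (t - s) - g t \<ge> (s/2) * (d1 (t/4) - d1 (t/2))" using Slow[OF s(1) True] .
      moreover have "(s/2) * (d1 (t/4) - d1 (t/2)) \<ge> (s/2) * del" using dt s by (intro mult_left_mono) auto
      moreover have "(s/2) * del \<ge> cS * s"
      proof -
        have "cS * s = (eta / T2) * ((s/2) * del)" unfolding cS_def by (simp add: algebra_simps)
        also have "\<dots> \<le> 1 * ((s/2) * del)" using ratio del s by (intro mult_right_mono) auto
        finally show ?thesis by simp
      qed
      ultimately show ?thesis by linarith
    next
      case False
      define u where "u = t - s"
      have u: "0 < u" "u \<le> t / 2" "u \<ge> eta" using False s eta unfolding u_def by auto
      have "g u + g (t - u) - g t \<ge> (u/2) * (d1 (t/4) - d1 (t/2))" using Slow[OF u(1,2)] .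
      moreover have "(u/2) * (d1 (t/4) - d1 (t/2)) \<ge> (u/2) * del" using dt u by (intro mult_left_mono) auto
      moreover have "(u/2) * del \<ge> (eta/2) * del" using u del by (intro mult_right_mono) auto
      moreover have "cS * s \<le> (eta/2) * del"
      proof -
        have "cS * s = (eta * del / 2) * (s / T2)" unfolding cS_def by (simp add: field_simps)
        also have "\<dots> \<le> (eta * del / 2) * 1"
          using s t T1pos T1T2 eta del by (intro mult_left_mono) auto
        finally show ?thesis by simp
      qed
      moreover have "t - u = s" unfolding u_def by simp
      ultimately show ?thesis unfolding u_def by (simp add: add.commute) linarith?
    qed
  qed
  define cD where "cD = g T1 * cS * d1 T2 * g eta / 4"
  have cD: "cD > 0" unfolding cD_def using gpos[of T1] gpos[of eta] d1pos[of T2] cS T1pos eta T1T2 by simp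
  have DlLow: "\<And>t s. T1 \<le> t \<Longrightarrow> t \<le> T2 \<Longrightarrow> 0 < s \<Longrightarrow> s \<le> t - eta \<Longrightarrow> Dl s t \<ge> cD * s^2"
  proof -
    fix t s assume t: "T1 \<le> t" "t \<le> T2" and s: "0 < s" "s \<le> t - eta"
    have st: "0 < s" "s < t" using s eta by auto
    have gt: "g t \<ge> g T1" using gmono[of T1 t] T1pos t by simp
    have gs: "g s \<ge> 0" "g (t - s) \<ge> 0" using gnn st by auto
    have F1: "g t + g (t-s) + g s \<ge> g T1" using gt gs by simp
    have F2: "g (t-s) + g s - g t \<ge> cS * s" using Slow2[OF t s] by simp
    have gss: "g s \<ge> s * d1 s" using tang[of s 0] st g0 by (simp add: algebra_simps)
    have "s * d1 s \<ge> s * d1 T2" using d1mono[of s T2] st t by (intro mult_left_mono) auto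
    moreover have "g t \<ge> g (t - s)" using gmono[of "t-s" t] st by simp
    ultimately have F3: "g t + g s - g (t-s) \<ge> s * d1 T2" using gss by simp
    have "g t \<ge> g s" using gmono[of s t] st by simp
    moreover have "g (t - s) \<ge> g eta" using gmono[of eta "t - s"] s eta by simp
    ultimately have F4: "g t + g (t-s) - g s \<ge> g eta" by simp
    have "g T1 * (cS * s) * (s * d1 T2) * g eta
        \<le> (g t + g (t-s) + g s) * (g (t-s) + g s - g t) * (g t + g s - g (t-s)) * (g t + g (t-s) - g s)"
      using F1 F2 F3 F4 gpos[of T1] T1pos cS st d1pos[of T2] T1T2 gpos[of eta] eta
      by (intro mult_mono4) auto
    also have "\<dots> = 4 * Dl s t" using Dl_heron[OF st] by simp
    finally show "Dl s t \<ge> cD * s^2" unfolding cD_def by (simp add: power2_eq_square algebra_simps)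
  qed
  define C where "C = M2 * Phi / 2 + M1 * Lp"
  have Cnn: "C \<ge> 0" unfolding C_def using M1nn M2nn Phinn Lpnn by simp
  define K where "K = C^2 * v T2 / (2 * cD)"
  have Knn: "K \<ge> 0" unfolding K_def using cD vpos[of T2] T1pos T1T2 by simp
  have numb: "\<And>h s. \<bar>h\<bar> < eta \<Longrightarrow> 0 < s \<Longrightarrow> s \<le> tstar + h - eta \<Longrightarrow>
      \<bar>kk v b c2 s (tstar + h) - kk v b c2 s tstar\<bar> \<le> C * s * \<bar>h\<bar>"
  proof -
    fix h s :: real assume h: "\<bar>h\<bar> < eta" and s: "0 < s" "s \<le> tstar + h - eta"
    define t where "t = tstar + h"
    have tT: "T1 \<le> t" "t \<le> T2" using h eta unfolding t_def T1_def T2_def by auto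
    have st: "s < t" "s < tstar" using s h eta unfolding t_def by auto
    define lo where "lo = min t tstar"
    define hi where "hi = max t tstar"
    have lohi: "s < lo" "hi \<le> T2" "lo \<le> hi" using st tT T1T2 r unfolding lo_def hi_def T2_def by auto
    have psiD: "\<And>x. lo \<le> x \<Longrightarrow> x \<le> hi \<Longrightarrow>
        ((\<lambda>x. v x - v (x - s)) has_real_derivative v1 x - v1 (x - s)) (at x)"
    proof -
      fix x assume x: "lo \<le> x" "x \<le> hi"
      have xs: "x - s > 0" "x > 0" using x lohi s by auto
      have "((\<lambda>y. v (y + - s)) has_real_derivative v1 (x - s)) (at x)"
        using DERIV_shift[of v "v1 (x - s)" x "- s"] vD[of "x - s"] xs by simp
      then have "((\<lambda>y. v (y - s)) has_real_derivative v1 (x - s)) (at x)" by simp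
      then show "((\<lambda>x. v x - v (x - s)) has_real_derivative v1 x - v1 (x - s)) (at x)"
        by (intro DERIV_diff vD xs(2))
    qed
    have psiB: "\<And>x. lo \<le> x \<Longrightarrow> x \<le> hi \<Longrightarrow> \<bar>v1 x - v1 (x - s)\<bar> \<le> M2 * s"
    proof -
      fix x assume x: "lo \<le> x" "x \<le> hi"
      have "\<bar>v1 x - v1 (x - s)\<bar> \<le> M2 * \<bar>x - (x - s)\<bar>"
      proof (rule lip[where a="x - s" and b=x and f'=v2])
        show "(v1 has_real_derivative v2 y) (at y)" if "x - s \<le> y" "y \<le> x" for y
          using v1D[of y] that x lohi s by simp
        show "\<bar>v2 y\<bar> \<le> M2" if "x - s \<le> y" "y \<le> x" for y
          using M2 that x lohi s by simp
      qed (use s in auto)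
      then show "\<bar>v1 x - v1 (x - s)\<bar> \<le> M2 * s" using s by simp
    qed
    have psi: "\<bar>(v t - v (t - s)) - (v tstar - v (tstar - s))\<bar> \<le> (M2 * s) * \<bar>t - tstar\<bar>"
      by (rule lip[where a=lo and b=hi and f="\<lambda>x. v x - v (x - s)", OF psiD psiB])
         (auto simp: lo_def hi_def)
    have G1: "\<bar>Gam v s t - Gam v s tstar\<bar> \<le> M2 * s * \<bar>h\<bar> / 2"
    proof -
      have tt: "t - tstar = h" unfolding t_def by simp
      have e: "Gam v s t - Gam v s tstar = ((v t - v (t - s)) - (v tstar - v (tstar - s))) / 2"
        unfolding Gam_simp(1)[OF s(1) st(1)] Gam_simp(1)[OF s(1) st(2)] by (simp add: field_simps)
      show ?thesis using psi unfolding e tt by simp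
    qed
    have vs: "\<bar>v s - v 0\<bar> \<le> M1 * (s - 0)"
    proof (rule mvt_bound[where f'=v1])
      show "continuous_on {0..s} v" using continuous_on_subset[OF v_cont] by auto
      show "(v has_real_derivative v1 x) (at x)" if "0 < x" "x < s" for x using vD that by simp
      show "\<bar>v1 x\<bar> \<le> M1" if "0 < x" "x < s" for x using M1 that st lohi unfolding lo_def by auto
    qed (use s in auto)
    have vts: "\<bar>v tstar - v (tstar - s)\<bar> \<le> M1 * \<bar>tstar - (tstar - s)\<bar>"
    proof (rule lip[where a="tstar - s" and b=tstar and f'=v1])
      show "(v has_real_derivative v1 y) (at y)" if "tstar - s \<le> y" "y \<le> tstar" for y
        using vD[of y] that st by simp
      show "\<bar>v1 y\<bar> \<le> M1" if "tstar - s \<le> y" "y \<le> tstar" for y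
        using M1 that st r unfolding T2_def by simp
    qed (use s in auto)
    have G0: "\<bar>Gam v s tstar\<bar> \<le> M1 * s"
      using vs vts s unfolding Gam_simp(1)[OF s(1) st(2)] by (simp add: v_0)
    have P1: "\<bar>phi t\<bar> \<le> Phi" using phibound tT by simp
    have P2: "\<bar>phi t - phi tstar\<bar> \<le> Lp * \<bar>t - tstar\<bar>"
    proof (rule lip[where a=T1 and b=T2 and f'=phi'])
      show "(phi has_real_derivative phi' y) (at y)" if "T1 \<le> y" "y \<le> T2" for y
        using phiD[of y] that T1pos by simp
      show "\<bar>phi' y\<bar> \<le> Lp" if "T1 \<le> y" "y \<le> T2" for y using Lp that by simp
    qed (use tT r in \<open>auto simp: T1_def T2_def\<close>)
    have kkphi: "\<And>t. kk v b c2 s t = Gam v s t * phi t" unfolding kk_def phi_def by simp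
    have "\<bar>Gam v s t * phi t - Gam v s tstar * phi tstar\<bar> \<le> (M2 * s * \<bar>h\<bar> / 2) * Phi + (M1 * s) * (Lp * \<bar>h\<bar>)"
      by (rule prod_diff_bound[OF G1 P1 G0]) (use P2 in \<open>simp add: t_def\<close>)
    also have "\<dots> = C * s * \<bar>h\<bar>" unfolding C_def by (simp add: algebra_simps)
    finally show "\<bar>kk v b c2 s (tstar + h) - kk v b c2 s tstar\<bar> \<le> C * s * \<bar>h\<bar>"
      unfolding kkphi t_def .
  qed
  have Upsb: "\<And>h s. \<bar>h\<bar> < eta \<Longrightarrow> 0 < s \<Longrightarrow> s < tstar + h \<Longrightarrow>
      Ups v b c1 c2 s (tstar + h) \<le> LL v b c2 (tstar + h) + K * h^2"
  proof -
    fix h s :: real assume h: "\<bar>h\<bar> < eta" and s: "0 < s" "s < tstar + h"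
    define t where "t = tstar + h"
    have tT: "T1 \<le> t" "t \<le> T2" using h eta unfolding t_def T1_def T2_def by auto
    show "Ups v b c1 c2 s (tstar + h) \<le> LL v b c2 (tstar + h) + K * h^2"
    proof (cases "kk v b c2 s t > c1 * s")
      case False
      then show ?thesis using Ups_else Knn unfolding t_def by simp
    next
      case True
      have st: "0 < s" "s < t" using s unfolding t_def by auto
      have vt: "v t > 0" using vpos[of t] tT T1pos by simp
      have sle: "s \<le> t - eta"
      proof (rule ccontr)
        assume "\<not> s \<le> t - eta"
        then have c1s: "c1 * s > c1 * (t - eta)" using c12 by simp
        have "v (t - s) \<ge> 0" using v_nonneg st by simp
        moreover have "v s \<le> v t" using vmono[of s t] st by simp
        ultimately have "Gam v s t \<le> v t" unfolding Gam_simp(1)[OF st] by simp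
        then have "Gam v s t / v t \<le> 1" using vt by simp
        moreover have "b + c2 * t > 0" using b_pos c_order st by (simp add: add_pos_pos)
        ultimately have "kk v b c2 s t \<le> 1 * (b + c2 * t)" unfolding kk_def
          by (intro mult_right_mono) auto
        then show False using True c1s keyeta[OF tT(1)] by (simp add: algebra_simps)
      qed
      have kb: "kk v b c2 s t - kk v b c2 s tstar \<le> C * s * \<bar>h\<bar>"
        using numb[OF h s(1)] sle unfolding t_def by (simp add: abs_le_iff)
      have sts: "s < tstar" using sle h unfolding t_def by simp
      have ex0: "0 < kk v b c2 s t - c1 * s" using True by simp
      have ex1: "kk v b c2 s t - c1 * s \<le> C * s * \<bar>h\<bar>" using kb Dt[OF s(1) sts] by simp
      have sq: "(kk v b c2 s t - c1 * s)^2 \<le> (C * s * \<bar>h\<bar>)^2"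
        using ex0 ex1 by (intro power_mono) auto
      have numle: "(kk v b c2 s t - c1 * s)^2 * v t \<le> (C * s * \<bar>h\<bar>)^2 * v T2"
        using sq vmono[of t T2] tT T1pos vt by (intro mult_mono) auto
      have denle: "2 * (cD * s^2) \<le> 2 * Dl s t" using DlLow[OF tT s(1) sle] by simp
      have "(kk v b c2 s t - c1 * s)^2 * v t / (2 * Dl s t) \<le> (C * s * \<bar>h\<bar>)^2 * v T2 / (2 * (cD * s^2))"
        using numle denle cD s vpos[of T2] T1pos T1T2 by (intro frac_le) auto
      also have "\<dots> = K * h^2" unfolding K_def using s cD by (simp add: field_simps power2_eq_square)
      finally show ?thesis using Ups_eq[OF st True] unfolding t_def by simp
    qed
  qed
  define Lk where "Lk = (\<lambda>x. LL v b c2 x + K * (x - tstar)^2)"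
  have LkD: "(Lk has_real_derivative Ld tstar) (at tstar)"
  proof -
    have q: "((\<lambda>x. K * (x - tstar)^2) has_real_derivative 0) (at tstar)"
      by (auto intro!: derivative_eq_intros)
    show ?thesis unfolding Lk_def using DERIV_add[OF LD[OF tspos] q] by simp
  qed
  have Lkt: "Lk tstar = LL v b c2 tstar" unfolding Lk_def by simp
  obtain h where h: "\<bar>h\<bar> < eta" "LL v b c2 (tstar + h) + K * h^2 < LL v b c2 tstar"
  proof (cases "Ld tstar > 0")
    case True
    obtain d where d: "d > 0" "\<forall>h>0. h < d \<longrightarrow> Lk (tstar - h) < Lk tstar"
      using DERIV_pos_inc_left[OF LkD True] by blast
    define h0 where "h0 = min d eta / 2"
    have h0: "h0 > 0" "h0 < d" "h0 < eta" using d eta unfolding h0_def by auto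
    have "Lk (tstar - h0) < Lk tstar" using d h0 by simp
    then have "LL v b c2 (tstar + (- h0)) + K * (- h0)^2 < LL v b c2 tstar"
      unfolding Lk_def by simp
    then show ?thesis using that[of "- h0"] h0 by simp
  next
    case False
    then have neg0: "Ld tstar < 0" using Ldne by simp
    obtain d where d: "d > 0" "\<forall>h>0. h < d \<longrightarrow> Lk tstar > Lk (tstar + h)"
      using DERIV_neg_dec_right[OF LkD neg0] by blast
    define h0 where "h0 = min d eta / 2"
    have h0: "h0 > 0" "h0 < d" "h0 < eta" using d eta unfolding h0_def by auto
    have "Lk (tstar + h0) < Lk tstar" using d h0 by simp
    then have "LL v b c2 (tstar + h0) + K * h0^2 < LL v b c2 tstar"
      unfolding Lk_def by simp
    then show ?thesis using that[of h0] h0 by simp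
  qed
  have tgt: "tstar + h > t0" using h(1) eta T1t0 unfolding T1_def by simp
  have S1: "(SUP s\<in>{0<..<tstar + h}. ereal (Ups v b c1 c2 s (tstar + h))) \<le> ereal (LL v b c2 (tstar + h) + K * h^2)"
    using Upsb[OF h(1)] by (intro SUP_least) auto
  have S2: "ereal (Ups v b c1 c2 sstar tstar) \<le> (SUP s\<in>{0<..<tstar}. ereal (Ups v b c1 c2 s tstar))"
    using sstar_in by (intro SUP_upper) auto
  have S3: "Ups v b c1 c2 sstar tstar = LL v b c2 tstar" using neg by (intro Ups_else) simp
  have S4: "(SUP s\<in>{0<..<tstar}. ereal (Ups v b c1 c2 s tstar))
      \<le> (SUP s\<in>{0<..<tstar + h}. ereal (Ups v b c1 c2 s (tstar + h)))"
    using tstar_min tgt by blast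
  have "ereal (LL v b c2 tstar) \<le> ereal (LL v b c2 (tstar + h) + K * h^2)"
    using S2 S4 S1 unfolding S3 by (rule order_trans[OF order_trans])
  then have "LL v b c2 tstar \<le> LL v b c2 (tstar + h) + K * h^2" by simp
  then show False using h(2) by simp
qed

end
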